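(* For a restricted $(\rho_r,\rho_w)$-AWTP channel (one in which the adversary's read and write sets coincide, $S_r=S_w$), the perfect-secrecy capacity satisfies $\mathsf C^0\le 1-\rho_r-\rho_w$, and for sufficiently small $\epsilon>0$ the $\epsilon$-secrecy capacity satisfies \[ \mathsf C^\epsilon\le 1-\rho_r-\rho_w+2\epsilon\rho_r\Big(1+\log_{|\Sigma|}\frac1\epsilon\Big). \]
   Context: $\Sigma$ finite additive group, $[N]=\{1,\dots,N\}$. $(\rho_r,\rho_w)$-AWTP channel: an adaptive computationally unbounded adversary reads the sent codeword $c\in\Sigma^N$ on a set $S_r$, $|S_r|\le\rho_rN$, and adds an error vector supported in $S_w$, $|S_w|\le\rho_wN$, chosen based on its view; the channel is restricted if additionally $S_r=S_w$ is required. An $(\epsilon,\delta)$-AWTP code: randomized encoder $\mathcal M\to\Sigma^N$, deterministic decoder, adversary views for any two messages at statistical distance $\le\epsilon$, decoding error probability $\le\delta$ against every adversary. Rate $\log|\mathcal M|/(N\log|\Sigma|)$. A family $\{C^N\}$ achieves rate $R$ if for every $\xi>0$ there is $N_0$ such that for $N\ge N_0$ rate $\ge R-\xi$ and error $\le\xi$. $\mathsf C^\epsilon$ is the largest achievable rate among families of $\epsilon$-secure codes for the channel; $\mathsf C^0$ for $\epsilon=0$. *)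

theory Defs
  imports "HOL-Probability.Probability"
begin

text \<open>Codewords in \<Sigma>^N are functions nat => 'a that vanish outside [N] = {1..N}.\<close>
definition words :: "nat \<Rightarrow> (nat \<Rightarrow> 'a::zero) set" where
  "words N = {c. \<forall>i. i \<notin> {1..N} \<longrightarrow> c i = 0}"

definition stat_dist :: "'b pmf \<Rightarrow> 'b pmf \<Rightarrow> real" where
  "stat_dist p q = (SUP A. \<bar>measure_pmf.prob p A - measure_pmf.prob q A\<bar>)"

text \<open>Deterministic adaptive reading: given the view so far (list of (position, value)),
  the strategy picks the next position to read or stops.\<close>
fun adv_run :: "((nat \<times> 'a) list \<Rightarrow> nat option) \<Rightarrow> nat \<Rightarrow> (nat \<Rightarrow> 'a)
                 \<Rightarrow> (nat \<times> 'a) list \<Rightarrow> (nat \<times> 'a) list" where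
  "adv_run rs 0 c v = v"
| "adv_run rs (Suc k) c v =
     (case rs v of None \<Rightarrow> v | Some i \<Rightarrow> adv_run rs k c (v @ [(i, c i)]))"

definition adv_view :: "((nat \<times> 'a) list \<Rightarrow> nat option) \<Rightarrow> nat \<Rightarrow> (nat \<Rightarrow> 'a) \<Rightarrow> (nat \<times> 'a) list" where
  "adv_view rs k c = adv_run rs k c []"

definition read_budget :: "real \<Rightarrow> nat \<Rightarrow> nat" where
  "read_budget \<rho> N = nat \<lfloor>\<rho> * real N\<rfloor>"

text \<open>A code: (number of messages K, message set {..<K}; randomized encoder; deterministic decoder).\<close>
type_synonym 'a awtp_code = "nat \<times> (nat \<Rightarrow> (nat \<Rightarrow> 'a) pmf) \<times> ((nat \<Rightarrow> 'a) \<Rightarrow> nat)"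

definition awtp_valid :: "nat \<Rightarrow> ('a::zero) awtp_code \<Rightarrow> bool" where
  "awtp_valid N C = (case C of (K, enc, dec) \<Rightarrow>
      1 \<le> K \<and> (\<forall>m<K. set_pmf (enc m) \<subseteq> words N))"

definition awtp_secure :: "nat \<Rightarrow> real \<Rightarrow> real \<Rightarrow> ('a::zero) awtp_code \<Rightarrow> bool" where
  "awtp_secure N \<rho>r \<epsilon> C = (case C of (K, enc, dec) \<Rightarrow>
      (\<forall>rs. \<forall>m1<K. \<forall>m2<K.
         stat_dist (map_pmf (adv_view rs (read_budget \<rho>r N)) (enc m1))
                   (map_pmf (adv_view rs (read_budget \<rho>r N)) (enc m2)) \<le> \<epsilon>))"

definition restricted_write :: "nat \<Rightarrow> real \<Rightarrow> ((nat \<times> 'a) list \<Rightarrow> (nat \<Rightarrow> 'a::zero)) \<Rightarrow> bool" where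
  "restricted_write N \<rho>w ew = (\<forall>v.
      {i. ew v i \<noteq> 0} \<subseteq> fst ` set v \<inter> {1..N} \<and>
      real (card {i. ew v i \<noteq> 0}) \<le> \<rho>w * real N)"

definition awtp_reliable :: "nat \<Rightarrow> real \<Rightarrow> real \<Rightarrow> real \<Rightarrow> ('a::{zero,plus}) awtp_code \<Rightarrow> bool" where
  "awtp_reliable N \<rho>r \<rho>w \<delta> C = (case C of (K, enc, dec) \<Rightarrow>
      (\<forall>rs ew. restricted_write N \<rho>w ew \<longrightarrow>
        (\<forall>m<K. measure_pmf.prob (enc m)
           {c. dec (\<lambda>i. c i + ew (adv_view rs (read_budget \<rho>r N) c) i) \<noteq> m} \<le> \<delta>)))"

definition awtp_code :: "nat \<Rightarrow> real \<Rightarrow> real \<Rightarrow> real \<Rightarrow> real \<Rightarrow> ('a::{zero,plus}) awtp_code \<Rightarrow> bool" where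
  "awtp_code N \<rho>r \<rho>w \<epsilon> \<delta> C =
     (awtp_valid N C \<and> awtp_secure N \<rho>r \<epsilon> C \<and> awtp_reliable N \<rho>r \<rho>w \<delta> C)"

definition awtp_rate :: "nat \<Rightarrow> ('a::finite) awtp_code \<Rightarrow> real" where
  "awtp_rate N C = ln (real (fst C)) / (real N * ln (real CARD('a)))"

definition awtp_achievable :: "('a::{finite,ab_group_add}) itself \<Rightarrow> real \<Rightarrow> real \<Rightarrow> real \<Rightarrow> real \<Rightarrow> bool" where
  "awtp_achievable T \<rho>r \<rho>w \<epsilon> R = (\<exists>F :: nat \<Rightarrow> 'a awtp_code.
      (\<forall>N. \<exists>\<delta>. awtp_code N \<rho>r \<rho>w \<epsilon> \<delta> (F N)) \<and>
      (\<forall>\<xi>>0. \<exists>N0. \<forall>N\<ge>N0. awtp_rate N (F N) \<ge> R - \<xi> \<and> awtp_code N \<rho>r \<rho>w \<epsilon> \<xi> (F N)))"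

definition awtp_capacity :: "('a::{finite,ab_group_add}) itself \<Rightarrow> real \<Rightarrow> real \<Rightarrow> real \<Rightarrow> ereal" where
  "awtp_capacity T \<rho>r \<rho>w \<epsilon> = Sup (ereal ` {R. awtp_achievable T \<rho>r \<rho>w \<epsilon> R})"

end

theory Submission imports Defs "HOL-Library.FuncSet" begin

definition rdr :: "nat \<Rightarrow> nat \<Rightarrow> (nat \<times> 'a) list \<Rightarrow> nat option" where
  "rdr s n v = (if length v < n then Some (s + length v) else None)"

lemma adv_run_rdr:
  "j \<le> n \<Longrightarrow> adv_run (rdr s n) k c (map (\<lambda>i. (i, c i)) [s..<s+j])
      = map (\<lambda>i. (i, c i)) [s..<s + min n (j+k)]"
proof (induction k arbitrary: j)
  case 0 then show ?case by simp
next
  case (Suc k)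
  show ?case
  proof (cases "j < n")
    case True
    have "adv_run (rdr s n) (Suc k) c (map (\<lambda>i. (i, c i)) [s..<s+j])
       = adv_run (rdr s n) k c (map (\<lambda>i. (i, c i)) [s..<s+Suc j])"
      using True by (simp add: rdr_def)
    also have "\<dots> = map (\<lambda>i. (i, c i)) [s..<s + min n (Suc j+k)]"
      using Suc.IH[of "Suc j"] True by simp
    finally show ?thesis by simp
  next
    case False
    then have "j = n" using Suc.prems by simp
    then show ?thesis by (simp add: rdr_def)
  qed
qed

lemma adv_view_rdr:
  "n \<le> k \<Longrightarrow> adv_view (rdr s n) k c = map (\<lambda>i. (i, c i)) [s..<s + n]"
  unfolding adv_view_def using adv_run_rdr[of 0 n s k c] by simp

lemma adv_view_rdr_eq:
  assumes "n \<le> k" "adv_view (rdr s n) k c = adv_view (rdr s n) k c'" "s \<le> i" "i < s + n"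
  shows "c i = c' i"
proof -
  have "map (\<lambda>i. (i, c i)) [s..<s + n] = map (\<lambda>i. (i, c' i)) [s..<s + n]"
    using assms adv_view_rdr by metis
  then show ?thesis using assms(3,4) by simp
qed

lemma map_of_view: "map_of (map (\<lambda>i. (i, c i)) xs) i = (if i \<in> set xs then Some (c i) else None)"
  by (induction xs) auto

lemma finite_words: "finite (words N :: (nat \<Rightarrow> 'a::{finite,zero}) set)"
proof -
  have "words N \<subseteq> (\<lambda>f i. if i \<in> {1..N} then f i else 0) ` (PiE {1..N} (\<lambda>_. UNIV::'a set))"
  proof
    fix c :: "nat \<Rightarrow> 'a" assume c: "c \<in> words N"
    have "c = (\<lambda>i. if i \<in> {1..N} then restrict c {1..N} i else 0)"
      using c by (auto simp: words_def)
    then show "c \<in> (\<lambda>f i. if i \<in> {1..N} then f i else 0) ` (PiE {1..N} (\<lambda>_. UNIV::'a set))"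
      by (intro image_eqI[where x="restrict c {1..N}"]) auto
  qed
  moreover have "finite (PiE {1..N} (\<lambda>_. UNIV::'a set))" by (intro finite_PiE) auto
  ultimately show ?thesis using finite_subset by blast
qed

lemma stat_dist_ge:
  "\<bar>measure_pmf.prob p A - measure_pmf.prob q A\<bar> \<le> stat_dist p q"
  unfolding stat_dist_def
proof (rule cSUP_upper)
  show "bdd_above (range (\<lambda>A. \<bar>measure_pmf.prob p A - measure_pmf.prob q A\<bar>))"
  proof (rule bdd_aboveI2[where M=1])
    fix B
    have "0 \<le> measure_pmf.prob p B" "measure_pmf.prob p B \<le> 1"
         "0 \<le> measure_pmf.prob q B" "measure_pmf.prob q B \<le> 1" by auto
    then show "\<bar>measure_pmf.prob p B - measure_pmf.prob q B\<bar> \<le> 1" by linarith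
  qed
qed simp

lemma counting:
  fixes enc :: "nat \<Rightarrow> (nat \<Rightarrow> 'a::{finite,ab_group_add}) pmf" and dec :: "(nat \<Rightarrow> 'a) \<Rightarrow> nat"
  assumes K: "1 \<le> K" and wt: "w + t \<le> N"
  and sup: "\<forall>m<K. set_pmf (enc m) \<subseteq> words N"
  and sec: "\<forall>m<K. stat_dist (map_pmf (adv_view (rdr (w+1) t) t) (enc m))
                    (map_pmf (adv_view (rdr (w+1) t) t) (enc 0)) \<le> \<epsilon>"
  and rel: "\<forall>m<K. measure_pmf.prob (enc m) {c. dec (\<lambda>i. if 1 \<le> i \<and> i \<le> w then 0 else c i) \<noteq> m} \<le> \<delta>"
  shows "real K * (1 - \<delta> - \<epsilon>) \<le> real CARD('a) ^ (N - t - w)"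
proof -
  define view where "view = (adv_view (rdr (w+1) t) t :: (nat \<Rightarrow> 'a) \<Rightarrow> _)"
  define zW where "zW = (\<lambda>c::nat \<Rightarrow> 'a. \<lambda>i. if 1 \<le> i \<and> i \<le> w then 0 else c i)"
  define G where "G = (\<lambda>m. {c \<in> words N. dec (zW c) = m})"
  define H where "H = (\<lambda>m. view -` (view ` G m))"
  define Q where "Q = CARD('a) ^ (N - t - w)"
  define p0 where "p0 = enc 0"
  have step1: "1 - \<delta> \<le> measure_pmf.prob (enc m) (G m)" if m: "m < K" for m
  proof -
    have "-G m \<subseteq> {c. dec (zW c) \<noteq> m} \<union> -words N" by (auto simp: G_def)
    then have "measure_pmf.prob (enc m) (-G m) \<le> measure_pmf.prob (enc m) ({c. dec (zW c) \<noteq> m} \<union> -words N)"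
      by (intro measure_pmf.finite_measure_mono) auto
    also have "\<dots> \<le> measure_pmf.prob (enc m) {c. dec (zW c) \<noteq> m} + measure_pmf.prob (enc m) (-words N)"
      by (rule measure_Un_le) auto
    also have "measure_pmf.prob (enc m) (-words N) = 0"
      using sup m by (subst measure_pmf_zero_iff) auto
    also have "measure_pmf.prob (enc m) {c. dec (zW c) \<noteq> m} \<le> \<delta>" using rel m by (simp add: zW_def)
    finally have "measure_pmf.prob (enc m) (-G m) \<le> \<delta>" by simp
    moreover have "measure_pmf.prob (enc m) (-G m) = 1 - measure_pmf.prob (enc m) (G m)"
      using measure_pmf.prob_compl[of "G m" "enc m"] by (simp add: Compl_eq_Diff_UNIV)
    ultimately show ?thesis by linarith
  qed
  have step2: "measure_pmf.prob (enc m) (G m) \<le> measure_pmf.prob p0 (H m) + \<epsilon>" if m: "m < K" for m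
  proof -
    have "measure_pmf.prob (enc m) (G m) \<le> measure_pmf.prob (enc m) (H m)"
      by (intro measure_pmf.finite_measure_mono) (auto simp: H_def)
    also have "measure_pmf.prob (enc m) (H m) - measure_pmf.prob p0 (H m)
        \<le> \<bar>measure_pmf.prob (map_pmf view (enc m)) (view ` G m) - measure_pmf.prob (map_pmf view p0) (view ` G m)\<bar>"
      by (simp add: H_def)
    also have "\<dots> \<le> \<epsilon>" using stat_dist_ge sec m unfolding view_def p0_def by (meson order_trans)
    finally show ?thesis by simp
  qed
  have step3: "card {m. m < K \<and> x \<in> H m} \<le> Q" for x
  proof -
    define A where "A = {w+t+1..N}"
    define g where "g = (\<lambda>m. SOME g. g \<in> G m \<and> view g = view x)"
    have gp: "g m \<in> G m \<and> view (g m) = view x" if "m \<in> {m. m < K \<and> x \<in> H m}" for m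
    proof -
      from that obtain g' where "g' \<in> G m" "view g' = view x" by (auto simp: H_def)
      then show ?thesis unfolding g_def by (metis (mono_tags, lifting) someI)
    qed
    have inj: "inj_on (\<lambda>m. restrict (g m) A) {m. m < K \<and> x \<in> H m}"
    proof (rule inj_onI)
      fix m1 m2 assume m1: "m1 \<in> {m. m < K \<and> x \<in> H m}" and m2: "m2 \<in> {m. m < K \<and> x \<in> H m}"
        and eq: "restrict (g m1) A = restrict (g m2) A"
      have g1: "g m1 \<in> G m1" "view (g m1) = view x" using gp[OF m1] by auto
      have g2: "g m2 \<in> G m2" "view (g m2) = view x" using gp[OF m2] by auto
      have "zW (g m1) = zW (g m2)"
      proof
        fix i
        show "zW (g m1) i = zW (g m2) i"
        proof (cases "1 \<le> i \<and> i \<le> w")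
          case True then show ?thesis by (simp add: zW_def)
        next
          case F: False
          show ?thesis
          proof (cases "w + 1 \<le> i \<and> i < w + 1 + t")
            case True
            have "g m1 i = g m2 i"
              using adv_view_rdr_eq[of t t "w+1" "g m1" "g m2" i] True g1 g2 by (simp add: view_def)
            then show ?thesis by (simp add: zW_def)
          next
            case False
            show ?thesis
            proof (cases "i \<in> A")
              case True
              then have "g m1 i = g m2 i" using fun_cong[OF eq, of i] by simp
              then show ?thesis by (simp add: zW_def)
            next
              case False
              then have "i \<notin> {1..N}" using F \<open>\<not> (w + 1 \<le> i \<and> i < w + 1 + t)\<close> by (auto simp: A_def)
              then show ?thesis using g1 g2 by (auto simp: zW_def G_def words_def)
            qed
          qed
        qed
      qed
      then show "m1 = m2" using g1 g2 by (auto simp: G_def)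
    qed
    have "card {m. m < K \<and> x \<in> H m} \<le> card (PiE A (\<lambda>_. UNIV :: 'a set))"
      by (rule card_inj_on_le[OF inj]) (auto simp: A_def intro: finite_PiE)
    also have "\<dots> = Q" by (simp add: card_PiE A_def Q_def add.commute)
    finally show ?thesis .
  qed
  define S0 where "S0 = set_pmf p0"
  have finS0: "finite S0" using sup K finite_words[of N] unfolding S0_def p0_def by (meson finite_subset less_le_trans zero_less_one le_eq_less_or_eq)
  have meq: "measure_pmf.prob p0 (H m) = (\<Sum>x\<in>S0. if x \<in> H m then pmf p0 x else 0)" for m
  proof -
    have "measure_pmf.prob p0 (H m) = measure_pmf.prob p0 (S0 \<inter> H m)"
      using measure_Int_set_pmf[of p0 "H m"] by (simp add: S0_def Int_commute)
    also have "\<dots> = sum (pmf p0) (S0 \<inter> H m)" using finS0 by (simp add: measure_measure_pmf_finite)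
    also have "\<dots> = (\<Sum>x\<in>S0. if x \<in> H m then pmf p0 x else 0)"
      using finS0 by (rule sum.inter_restrict)
    finally show ?thesis .
  qed
  have step4: "(\<Sum>m<K. measure_pmf.prob p0 (H m)) \<le> real Q"
  proof -
    have "(\<Sum>m<K. measure_pmf.prob p0 (H m)) = (\<Sum>x\<in>S0. \<Sum>m<K. if x \<in> H m then pmf p0 x else 0)"
      by (simp add: meq sum.swap[of _ S0])
    also have "\<dots> = (\<Sum>x\<in>S0. pmf p0 x * real (card {m. m < K \<and> x \<in> H m}))"
    proof (rule sum.cong[OF refl])
      fix x
      have "(\<Sum>m<K. if x \<in> H m then pmf p0 x else 0) = (\<Sum>m\<in>{..<K} \<inter> {m. x \<in> H m}. pmf p0 x)"
        by (simp add: sum.If_cases)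
      also have "{..<K} \<inter> {m. x \<in> H m} = {m. m < K \<and> x \<in> H m}" by auto
      finally show "(\<Sum>m<K. if x \<in> H m then pmf p0 x else 0) = pmf p0 x * real (card {m. m < K \<and> x \<in> H m})"
        by simp
    qed
    also have "\<dots> \<le> (\<Sum>x\<in>S0. pmf p0 x * real Q)"
      by (intro sum_mono mult_left_mono) (auto simp: step3 pmf_nonneg)
    also have "\<dots> = real Q * (\<Sum>x\<in>S0. pmf p0 x)" by (simp add: sum_distrib_left mult.commute)
    also have "(\<Sum>x\<in>S0. pmf p0 x) = 1" using finS0 by (intro sum_pmf_eq_1) (auto simp: S0_def)
    finally show ?thesis by simp
  qed
  have "(\<Sum>m<K. 1 - \<delta>) \<le> (\<Sum>m<K. measure_pmf.prob p0 (H m) + \<epsilon>)"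
    by (intro sum_mono) (use step1 step2 in force)
  also have "\<dots> = (\<Sum>m<K. measure_pmf.prob p0 (H m)) + real K * \<epsilon>" by (simp add: sum.distrib)
  finally have "real K * (1 - \<delta>) \<le> real Q + real K * \<epsilon>" using step4 by simp
  then show ?thesis by (simp add: Q_def algebra_simps)
qed

lemma code_bound:
  fixes enc :: "nat \<Rightarrow> (nat \<Rightarrow> 'a::{finite,ab_group_add}) pmf" and dec :: "(nat \<Rightarrow> 'a) \<Rightarrow> nat"
  assumes code: "awtp_code N \<rho>r \<rho>w \<epsilon> \<delta> (K, enc, dec)"
    and "0 \<le> \<rho>w" "\<rho>w \<le> \<rho>r" "\<rho>r + \<rho>w \<le> 1"
  shows "real K * (1 - \<delta> - \<epsilon>) \<le> real CARD('a) ^ (N - read_budget \<rho>r N - nat \<lfloor>\<rho>w * real N\<rfloor>)"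
proof -
  define t where "t = read_budget \<rho>r N"
  define w where "w = nat \<lfloor>\<rho>w * real N\<rfloor>"
  have wle: "real w \<le> \<rho>w * real N" using assms(2) by (simp add: w_def)
  have tle: "real t \<le> \<rho>r * real N" using assms(2,3) by (simp add: t_def read_budget_def)
  have wt: "w \<le> t" unfolding w_def t_def read_budget_def
    using assms(2,3) by (intro nat_mono floor_mono mult_right_mono) auto
  have "real (w + t) \<le> real N"
  proof -
    have "real (w + t) \<le> (\<rho>r + \<rho>w) * real N" using wle tle by (simp add: algebra_simps)
    also have "\<dots> \<le> 1 * real N" using assms(4) by (intro mult_right_mono) auto
    finally show ?thesis by simp
  qed
  then have wtN: "w + t \<le> N" by linarith
  from code have K: "1 \<le> K" and sup: "\<forall>m<K. set_pmf (enc m) \<subseteq> words N"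
    by (auto simp: awtp_code_def awtp_valid_def)
  have sec: "\<forall>m<K. stat_dist (map_pmf (adv_view (rdr (w+1) t) t) (enc m))
                    (map_pmf (adv_view (rdr (w+1) t) t) (enc 0)) \<le> \<epsilon>"
    using code K by (auto simp: awtp_code_def awtp_secure_def t_def)
  define ew where "ew = (\<lambda>(v::(nat \<times> 'a) list) i. if 1 \<le> i \<and> i \<le> w then (case map_of v i of Some a \<Rightarrow> - a | None \<Rightarrow> 0) else 0)"
  have rw: "restricted_write N \<rho>w ew"
    unfolding restricted_write_def
  proof (intro allI conjI)
    fix v
    have sub: "{i. ew v i \<noteq> 0} \<subseteq> {1..w}" by (auto simp: ew_def split: if_splits)
    show "{i. ew v i \<noteq> 0} \<subseteq> fst ` set v \<inter> {1..N}"
    proof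
      fix i assume i: "i \<in> {i. ew v i \<noteq> 0}"
      then obtain a where "map_of v i = Some a" by (auto simp: ew_def split: if_splits option.splits)
      then have "i \<in> fst ` set v" by (metis map_of_SomeD fst_conv image_eqI)
      moreover have "i \<in> {1..N}" using sub i wtN by auto
      ultimately show "i \<in> fst ` set v \<inter> {1..N}" by blast
    qed
    have "card {i. ew v i \<noteq> 0} \<le> card {1..w}" by (rule card_mono[OF _ sub]) simp
    then have "real (card {i. ew v i \<noteq> 0}) \<le> real w" by simp
    then show "real (card {i. ew v i \<noteq> 0}) \<le> \<rho>w * real N" using wle by linarith
  qed
  have rel: "\<forall>m<K. measure_pmf.prob (enc m) {c. dec (\<lambda>i. if 1 \<le> i \<and> i \<le> w then 0 else c i) \<noteq> m} \<le> \<delta>"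
  proof (intro allI impI)
    fix m assume m: "m < K"
    have "measure_pmf.prob (enc m) {c. dec (\<lambda>i. c i + ew (adv_view (rdr 1 w) (read_budget \<rho>r N) c) i) \<noteq> m} \<le> \<delta>"
      using code rw m unfolding awtp_code_def awtp_reliable_def by auto
    moreover have "(\<lambda>i. c i + ew (adv_view (rdr 1 w) (read_budget \<rho>r N) c) i) = (\<lambda>i. if 1 \<le> i \<and> i \<le> w then 0 else c i)" for c
    proof -
      have "adv_view (rdr 1 w) (read_budget \<rho>r N) c = map (\<lambda>i. (i, c i)) [1..<1 + w]"
        using adv_view_rdr[of w t 1 c] wt by (simp add: t_def)
      then have "map_of (adv_view (rdr 1 w) (read_budget \<rho>r N) c) i = Some (c i)" if "1 \<le> i \<and> i \<le> w" for i
        using that by (simp only: map_of_view set_upt) auto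
      then show ?thesis unfolding ew_def by (intro ext) auto
    qed
    ultimately show "measure_pmf.prob (enc m) {c. dec (\<lambda>i. if 1 \<le> i \<and> i \<le> w then 0 else c i) \<noteq> m} \<le> \<delta>"
      by simp
  qed
  show ?thesis using counting[OF K wtN sup sec rel] by (simp add: t_def w_def)
qed

lemma ach_bound:
  assumes ach: "awtp_achievable TYPE('a::{finite,ab_group_add}) \<rho>r \<rho>w \<epsilon> R"
    and a: "0 \<le> \<rho>w" "\<rho>w \<le> \<rho>r" "\<rho>r + \<rho>w \<le> 1" and e: "\<epsilon> < 1"
  shows "R \<le> 1 - \<rho>r - \<rho>w"
proof (rule ccontr)
  define B where "B = 1 - \<rho>r - \<rho>w"
  assume "\<not> R \<le> 1 - \<rho>r - \<rho>w"
  then have d: "R - B > 0" by (simp add: B_def)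
  define \<xi> where "\<xi> = min ((R - B) / 3) ((1 - \<epsilon>) / 2)"
  have xi: "\<xi> > 0" using d e by (simp add: \<xi>_def)
  from ach obtain F :: "nat \<Rightarrow> 'a awtp_code" where
    F: "\<forall>\<xi>>0. \<exists>N0. \<forall>N\<ge>N0. awtp_rate N (F N) \<ge> R - \<xi> \<and> awtp_code N \<rho>r \<rho>w \<epsilon> \<xi> (F N)"
    unfolding awtp_achievable_def by blast
  from F xi obtain N0 where N0: "\<forall>N\<ge>N0. awtp_rate N (F N) \<ge> R - \<xi> \<and> awtp_code N \<rho>r \<rho>w \<epsilon> \<xi> (F N)"
    by blast
  have B0: "B \<ge> 0" using a by (simp add: B_def)
  define c where "c = 1 - \<xi> - \<epsilon>"
  have "\<xi> \<le> (1 - \<epsilon>) / 2" unfolding \<xi>_def by (rule min.cobounded2)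
  then have c: "c > 0" using e unfolding c_def by argo
  define E where "E = max 0 (- ln c)"
  have E: "E \<ge> 0" "- ln c \<le> E" by (simp_all add: E_def)
  define D where "D = 2 + E / ln 2"
  have D: "D > 0" using E by (simp add: D_def add_pos_nonneg)
  define N where "N = max N0 (nat \<lceil>D / \<xi>\<rceil> + 1)"
  have NN0: "N \<ge> N0" by (simp add: N_def)
  have "real N > D / \<xi>" unfolding N_def by linarith
  then have DN: "D / real N < \<xi>" using xi D
    by (metis divide_less_eq mult.commute pos_divide_less_eq zero_less_divide_iff order.strict_trans)
  have Npos: "real N > 0" using \<open>real N > D / \<xi>\<close> D xi by (smt (verit) divide_pos_pos)
  obtain K enc dec where FN: "F N = (K, enc, dec)" by (metis prod_cases3)
  have rate: "awtp_rate N (F N) \<ge> R - \<xi>" and code: "awtp_code N \<rho>r \<rho>w \<epsilon> \<xi> (K, enc, dec)"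
    using N0 NN0 FN by auto
  have K1: "1 \<le> K" using code by (simp add: awtp_code_def awtp_valid_def)
  have rateB: "awtp_rate N (F N) \<le> B + D / real N"
  proof (cases "CARD('a) = 1")
    case True
    then have "awtp_rate N (F N) = 0" by (simp add: awtp_rate_def)
    then show ?thesis using B0 D Npos by simp
  next
    case False
    then have q2: "CARD('a) \<ge> 2" using finite_UNIV_card_ge_0[OF finite[of "UNIV :: 'a set"]] by linarith
    define L where "L = ln (real CARD('a))"
    have L2: "L \<ge> ln 2" using q2 by (simp add: L_def)
    have Lpos: "L > 0" using L2 by (smt (verit) ln_gt_zero_iff one_less_numeral_iff semiring_norm(76))
    define t where "t = read_budget \<rho>r N"
    define w where "w = nat \<lfloor>\<rho>w * real N\<rfloor>"
    have tge: "real t \<ge> \<rho>r * real N - 1" using a by (simp add: t_def read_budget_def)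
    have wge: "real w \<ge> \<rho>w * real N - 1" using a by (simp add: w_def)
    have wle: "real w \<le> \<rho>w * real N" using a by (simp add: w_def)
    have tle: "real t \<le> \<rho>r * real N" using a by (simp add: t_def read_budget_def)
    have "real (w + t) \<le> (\<rho>r + \<rho>w) * real N" using wle tle by (simp add: algebra_simps)
    also have "\<dots> \<le> 1 * real N" using a by (intro mult_right_mono) auto
    finally have wtN: "w + t \<le> N" by simp
    have cb: "real K * c \<le> real CARD('a) ^ (N - t - w)"
      using code_bound[OF code a] by (simp add: c_def t_def w_def)
    have "ln (real K * c) \<le> ln (real CARD('a) ^ (N - t - w))"
      using cb K1 c by (subst ln_le_cancel_iff) auto
    then have "ln (real K) + ln c \<le> real (N - t - w) * L"
      using K1 c by (simp add: ln_mult ln_realpow L_def)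
    moreover have "real (N - t - w) = real N - real t - real w" using wtN by simp
    ultimately have "ln (real K) \<le> (real N - real t - real w) * L + E" using E(2) by (simp add: algebra_simps)
    also have "\<dots> \<le> (real N * B + 2) * L + E"
      using tge wge Lpos by (intro add_right_mono mult_right_mono) (auto simp: B_def algebra_simps)
    also have "E \<le> E / ln 2 * L"
    proof -
      have "E / ln 2 * L \<ge> E / ln 2 * ln 2" using E L2 by (intro mult_left_mono) auto
      then show ?thesis by simp
    qed
    finally have "ln (real K) \<le> (real N * B + D) * L" by (simp add: D_def algebra_simps)
    then have "ln (real K) / (real N * L) \<le> (real N * B + D) * L / (real N * L)"
      using Npos Lpos by (intro divide_right_mono) auto
    also have "\<dots> = B + D / real N" using Npos Lpos by (simp add: field_simps)
    finally show ?thesis using FN by (simp add: awtp_rate_def L_def)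
  qed
  have "R - \<xi> < B + \<xi>" using rate rateB DN by linarith
  moreover have "\<xi> \<le> (R - B) / 3" unfolding \<xi>_def by (rule min.cobounded1)
  ultimately show False using d by argo
qed

theorem mainTheorem5:
  fixes \<rho>r \<rho>w :: real
  assumes "0 \<le> \<rho>w" and "\<rho>w \<le> \<rho>r" and "\<rho>r + \<rho>w \<le> 1"
  shows "awtp_capacity TYPE('a::{finite,ab_group_add}) \<rho>r \<rho>w 0 \<le> ereal (1 - \<rho>r - \<rho>w)
    \<and> (\<exists>\<epsilon>0>0. \<forall>\<epsilon>. 0 < \<epsilon> \<and> \<epsilon> < \<epsilon>0 \<longrightarrow>
         awtp_capacity TYPE('a) \<rho>r \<rho>w \<epsilon>
           \<le> ereal (1 - \<rho>r - \<rho>w + 2 * \<epsilon> * \<rho>r * (1 + log (real CARD('a)) (1 / \<epsilon>))))"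
proof -
  have cap: "awtp_capacity TYPE('a) \<rho>r \<rho>w \<epsilon> \<le> ereal (1 - \<rho>r - \<rho>w)" if "\<epsilon> < 1" for \<epsilon>
    unfolding awtp_capacity_def
    by (rule Sup_least) (use ach_bound[OF _ assms that] in auto)
  have "\<exists>\<epsilon>0>0. \<forall>\<epsilon>. 0 < \<epsilon> \<and> \<epsilon> < \<epsilon>0 \<longrightarrow>
         awtp_capacity TYPE('a) \<rho>r \<rho>w \<epsilon>
           \<le> ereal (1 - \<rho>r - \<rho>w + 2 * \<epsilon> * \<rho>r * (1 + log (real CARD('a)) (1 / \<epsilon>)))"
  proof (intro exI[of _ 1] conjI allI impI)
    fix \<epsilon> :: real assume e: "0 < \<epsilon> \<and> \<epsilon> < 1"
    have "ln (1 / \<epsilon>) \<ge> 0" using e by simp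
    moreover have "ln (real CARD('a)) \<ge> 0" using finite_UNIV_card_ge_0[OF finite[of "UNIV :: 'a set"]] by simp
    ultimately have "log (real CARD('a)) (1 / \<epsilon>) \<ge> 0" by (simp add: log_def)
    moreover have "\<rho>r \<ge> 0" using assms by linarith
    ultimately have "2 * \<epsilon> * \<rho>r * (1 + log (real CARD('a)) (1 / \<epsilon>)) \<ge> 0" using e by simp
    then show "awtp_capacity TYPE('a) \<rho>r \<rho>w \<epsilon>
           \<le> ereal (1 - \<rho>r - \<rho>w + 2 * \<epsilon> * \<rho>r * (1 + log (real CARD('a)) (1 / \<epsilon>)))"
      using cap[of \<epsilon>] e by (meson order_trans ereal_less_eq(3) le_add_same_cancel1)
  qed simp
  then show ?thesis using cap[of 0] by simp
qed

end
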